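(* In the setting described in the context, let $\Lambda > 1$ be a constant such that for every $x \in \Omega$ and all nonnegative reals $a_0,\dots,a_q$ with $a_i = 0$ whenever $u_i(x) \leq -2\Lambda^{-1}$, one has $\sum_{i=0}^q a_i \leq \Lambda |\sum_{i=0}^q a_i N_i|$. Then for every $\gamma \in (0,\frac12)$ there exists $\bar\lambda$ such that for all $\lambda_0 \geq \bar\lambda$ the following holds: if $0 \leq k \leq q$ and $x \in \Omega$ satisfies $-\Lambda^{-1} \leq \hat u_k(x) \leq 0$, then $|d\hat u_k| \geq \Lambda^{-1}$ at $x$. In particular, $\hat\Sigma = \{\hat u_q = 0\}$ is a smooth hypersurface.
   Context: $n\ge3$; $u_0,\dots,u_q$ are non-constant linear (affine) functions on $\mathbb{R}^n$ and $\Omega=\bigcap_{m=0}^q\{u_m\le 0\}$ is a compact convex polytope with non-empty interior, such that: (a) for each $k$, $\{u_k>0\}\cap\bigcap_{m\neq k}\{u_m\le0\}\neq\emptyset$; (b) the Euclidean gradient of each $u_k$ is a unit vector $N_k$; (c) for $j<k$, if some $x\in\Omega$ has $u_j(x)=u_k(x)=0$ then $\langle N_j,N_k\rangle\le0$. Fix a smooth even $\eta:\mathbb{R}\to\mathbb{R}$ with $\eta(t)=|t|$ for $|t|\ge\frac12$ and $\eta''\ge0$. For $\gamma\in(0,\frac12)$, $\lambda_0>1$ put $\lambda_k=\gamma^{-k}\lambda_0$, $\hat u_0=u_0$, $\hat u_k=\frac12\big(\hat u_{k-1}+u_k+\lambda_k^{-1}\eta(\lambda_k(\hat u_{k-1}-u_k))\big)$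 for $1\le k\le q$. *)

theory Defs
  imports "HOL-Analysis.Analysis"
begin

definition lam :: "real \<Rightarrow> real \<Rightarrow> nat \<Rightarrow> real" where
  "lam \<gamma> l0 k = l0 / \<gamma> ^ k"

primrec uhat :: "(real \<Rightarrow> real) \<Rightarrow> real \<Rightarrow> real \<Rightarrow> (nat \<Rightarrow> 'a \<Rightarrow> real) \<Rightarrow> nat \<Rightarrow> 'a \<Rightarrow> real" where
  "uhat \<eta> \<gamma> l0 u 0 x = u 0 x"
| "uhat \<eta> \<gamma> l0 u (Suc k) x =
     (uhat \<eta> \<gamma> l0 u k x + u (Suc k) x
      + \<eta> (lam \<gamma> l0 (Suc k) * (uhat \<eta> \<gamma> l0 u k x - u (Suc k) x)) / lam \<gamma> l0 (Suc k)) / 2"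

definition smooth_real :: "(real \<Rightarrow> real) \<Rightarrow> bool" where
  "smooth_real f \<longleftrightarrow> (\<forall>m t. ((deriv ^^ m) f) differentiable (at t))"

end

theory Submission
  imports Defs
begin

lemma eta_props:
  fixes \<eta> :: "real \<Rightarrow> real"
  assumes eta_smooth: "smooth_real \<eta>"
    and eta_even: "\<And>t. \<eta> (- t) = \<eta> t"
    and eta_abs: "\<And>t. \<bar>t\<bar> \<ge> 1/2 \<Longrightarrow> \<eta> t = \<bar>t\<bar>"
    and eta_convex: "\<And>t. deriv (deriv \<eta>) t \<ge> 0"
  shows "\<And>t. (\<eta> has_real_derivative deriv \<eta> t) (at t)"
    and "\<And>t. t < -1/2 \<Longrightarrow> deriv \<eta> t = -1"
    and "\<And>t. t > 1/2 \<Longrightarrow> deriv \<eta> t = 1"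
    and "\<And>t. \<bar>deriv \<eta> t\<bar> \<le> 1"
    and "\<And>t. \<bar>t\<bar> \<le> \<eta> t"
    and "\<And>t. \<eta> t \<le> \<bar>t\<bar> + 1"
proof -
  have D: "(\<eta> has_real_derivative deriv \<eta> t) (at t)" for t
  proof -
    have "\<eta> differentiable (at t)" using eta_smooth unfolding smooth_real_def
      by (metis funpow_0)
    then show ?thesis by (simp add: DERIV_deriv_iff_real_differentiable)
  qed
  then show "\<And>t. (\<eta> has_real_derivative deriv \<eta> t) (at t)" .
  have DD: "(deriv \<eta> has_real_derivative deriv (deriv \<eta>) t) (at t)" for t
  proof -
    have "deriv \<eta> differentiable (at t)" using eta_smooth unfolding smooth_real_def
      by (metis funpow_0 funpow.simps(2) o_apply)
    then show ?thesis by (simp add: DERIV_deriv_iff_real_differentiable)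
  qed
  have mono: "deriv \<eta> s \<le> deriv \<eta> t" if "s \<le> t" for s t
    by (rule DERIV_nonneg_imp_nondecreasing[OF that]) (use DD eta_convex in blast)
  have neg: "deriv \<eta> t = -1" if "t < -1/2" for t
  proof -
    have "((\<lambda>x. - x) has_real_derivative -1) (at t)"
      by (auto intro!: derivative_eq_intros)
    then have "(\<eta> has_real_derivative -1) (at t)"
      by (rule has_field_derivative_transform_within_open[where S="{..< -1/2}"])
        (use that eta_abs in auto)
    then show ?thesis using D DERIV_unique by blast
  qed
  then show "\<And>t. t < -1/2 \<Longrightarrow> deriv \<eta> t = -1" .
  have pos: "deriv \<eta> t = 1" if "t > 1/2" for t
  proof -
    have "((\<lambda>x. x) has_real_derivative 1) (at t)"
      by (auto intro!: derivative_eq_intros)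
    then have "(\<eta> has_real_derivative 1) (at t)"
      by (rule has_field_derivative_transform_within_open[where S="{1/2 <..}"])
        (use that eta_abs in auto)
    then show ?thesis using D DERIV_unique by blast
  qed
  then show "\<And>t. t > 1/2 \<Longrightarrow> deriv \<eta> t = 1" .
  have B: "\<bar>deriv \<eta> t\<bar> \<le> 1" for t
    using mono[of t 1] mono[of "-1" t] pos[of 1] neg[of "-1"] pos[of t] neg[of t]
    by (cases "t > 1/2"; cases "t < -1/2") auto
  then show "\<And>t. \<bar>deriv \<eta> t\<bar> \<le> 1" .
  have L: "\<bar>\<eta> s - \<eta> t\<bar> \<le> \<bar>s - t\<bar>" for s t
  proof -
    have *: "\<bar>\<eta> b - \<eta> a\<bar> \<le> b - a" if ab: "a < b" for a b
    proof -
      obtain z where "\<eta> b - \<eta> a = (b - a) * deriv \<eta> z"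
        using MVT2[OF ab, of \<eta> "deriv \<eta>"] D by blast
      then have "\<bar>\<eta> b - \<eta> a\<bar> = (b - a) * \<bar>deriv \<eta> z\<bar>" using ab by (simp add: abs_mult)
      also have "\<dots> \<le> (b - a) * 1" using B[of z] ab by (intro mult_left_mono) auto
      finally show ?thesis by simp
    qed
    show ?thesis
      using *[of s t] *[of t s] by (cases "s < t"; cases "t < s") auto
  qed
  have h: "\<eta> (1/2) = 1/2" using eta_abs[of "1/2"] by simp
  have ge: "t \<le> \<eta> t" for t
  proof (cases "t \<ge> 1/2")
    case True then show ?thesis using eta_abs[of t] by simp
  next
    case False then show ?thesis using L[of "1/2" t] h by auto
  qed
  show "\<bar>t\<bar> \<le> \<eta> t" for t using ge[of t] ge[of "-t"] eta_even[of t] by auto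
  show "\<eta> t \<le> \<bar>t\<bar> + 1" for t using L[of t "1/2"] h by auto
qed

lemma uhat_ge:
  fixes u :: "nat \<Rightarrow> 'a \<Rightarrow> real"
  assumes eta_ge: "\<And>t. \<bar>t\<bar> \<le> \<eta> t" and pos: "0 < \<gamma>" "0 < l0"
  shows "\<forall>i\<le>k. u i x \<le> uhat \<eta> \<gamma> l0 u k x"
proof (induction k)
  case 0 then show ?case by simp
next
  case (Suc k)
  define L where "L = lam \<gamma> l0 (Suc k)"
  have L: "L > 0" unfolding L_def lam_def using pos by simp
  define U where "U = uhat \<eta> \<gamma> l0 u k x"
  define b where "b = u (Suc k) x"
  have "\<bar>L * (U - b)\<bar> \<le> \<eta> (L * (U - b))" by (rule eta_ge)
  moreover have "\<bar>L * (U - b)\<bar> = L * \<bar>U - b\<bar>" using L by (simp add: abs_mult)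
  ultimately have "\<bar>U - b\<bar> \<le> \<eta> (L * (U - b)) / L" using L by (simp add: pos_le_divide_eq mult.commute)
  then have "U \<le> uhat \<eta> \<gamma> l0 u (Suc k) x \<and> b \<le> uhat \<eta> \<gamma> l0 u (Suc k) x"
    by (simp add: U_def b_def L_def) linarith
  then show ?case using Suc unfolding U_def b_def by (auto simp: le_Suc_eq)
qed

lemma uhat_grad:
  fixes u :: "nat \<Rightarrow> 'a::euclidean_space \<Rightarrow> real" and N :: "nat \<Rightarrow> 'a"
  assumes affine: "\<And>m x. m \<le> q \<Longrightarrow> u m x = N m \<bullet> x + c m"
    and D: "\<And>t. (\<eta> has_real_derivative \<eta>' t) (at t)"
    and neg: "\<And>t. t < -1/2 \<Longrightarrow> \<eta>' t = -1"
    and posd: "\<And>t. t > 1/2 \<Longrightarrow> \<eta>' t = 1"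
    and B: "\<And>t. \<bar>\<eta>' t\<bar> \<le> 1"
    and eta_ub: "\<And>t. \<eta> t \<le> \<bar>t\<bar> + 1"
    and g: "0 < \<gamma>" "\<gamma> < 1/2" and l0: "0 < l0"
  shows "k \<le> q \<Longrightarrow> \<exists>a. (uhat \<eta> \<gamma> l0 u k has_derivative (\<lambda>h. (\<Sum>i\<le>k. a i *\<^sub>R N i) \<bullet> h)) (at x)
     \<and> (\<forall>i\<le>k. 0 \<le> a i) \<and> (\<Sum>i\<le>k. a i) = 1
     \<and> (\<forall>i\<le>k. a i \<noteq> 0 \<longrightarrow> uhat \<eta> \<gamma> l0 u k x \<le> u i x + (1 - (1/2)^k) / l0)"
proof (induction k)
  case 0
  have "uhat \<eta> \<gamma> l0 u 0 = (\<lambda>y. N 0 \<bullet> y + c 0)" using affine by (auto simp: fun_eq_iff)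
  moreover have "((\<lambda>y. N 0 \<bullet> y + c 0) has_derivative (\<lambda>h. N 0 \<bullet> h)) (at x)"
    by (auto intro!: derivative_eq_intros)
  ultimately show ?case using affine[of 0 x] by (intro exI[of _ "\<lambda>i. 1"]) auto
next
  case (Suc k)
  then obtain a where ha: "(uhat \<eta> \<gamma> l0 u k has_derivative (\<lambda>h. (\<Sum>i\<le>k. a i *\<^sub>R N i) \<bullet> h)) (at x)"
     "\<forall>i\<le>k. 0 \<le> a i" "(\<Sum>i\<le>k. a i) = 1"
     "\<forall>i\<le>k. a i \<noteq> 0 \<longrightarrow> uhat \<eta> \<gamma> l0 u k x \<le> u i x + (1 - (1/2)^k) / l0" by auto
  define G where "G = (\<Sum>i\<le>k. a i *\<^sub>R N i)"
  define L where "L = lam \<gamma> l0 (Suc k)"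
  have L: "L > 0" unfolding L_def lam_def using g l0 by simp
  define Uf where "Uf = uhat \<eta> \<gamma> l0 u k"
  define bf where "bf = (\<lambda>y. N (Suc k) \<bullet> y + c (Suc k))"
  have bfu: "u (Suc k) = bf" using affine Suc.prems by (auto simp: fun_eq_iff bf_def)
  define s where "s = L * (Uf x - bf x)"
  define e where "e = \<eta>' s"
  define a' where "a' = (\<lambda>i. if i = Suc k then (1 - e) / 2 else (1 + e) / 2 * a i)"
  have eqf: "uhat \<eta> \<gamma> l0 u (Suc k) = (\<lambda>y. (1/2) * (Uf y + bf y + (1/L) * \<eta> (L * (Uf y - bf y))))"
    by (auto simp: fun_eq_iff Uf_def bfu L_def)
  have dU: "(Uf has_derivative (\<lambda>h. G \<bullet> h)) (at x)" using ha(1) by (simp add: Uf_def G_def)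
  have db: "(bf has_derivative (\<lambda>h. N (Suc k) \<bullet> h)) (at x)" unfolding bf_def
    by (auto intro!: derivative_eq_intros)
  have dl: "((\<lambda>y. L * (Uf y - bf y)) has_derivative (\<lambda>h. L * (G \<bullet> h - N (Suc k) \<bullet> h))) (at x)"
    by (intro derivative_intros dU db)
  have dc: "((\<lambda>y. \<eta> (L * (Uf y - bf y))) has_derivative (\<lambda>h. L * (G \<bullet> h - N (Suc k) \<bullet> h) * e)) (at x)"
    using DERIV_compose_FDERIV[OF D dl] by (simp add: e_def s_def)
  have dtot: "(uhat \<eta> \<gamma> l0 u (Suc k) has_derivative
     (\<lambda>h. (G \<bullet> h + N (Suc k) \<bullet> h + L * (G \<bullet> h - N (Suc k) \<bullet> h) * e / L) / 2)) (at x)"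
  proof -
    have "((\<lambda>y. 1/L * \<eta> (L * (Uf y - bf y))) has_derivative (\<lambda>h. 1/L * (L * (G \<bullet> h - N (Suc k) \<bullet> h) * e))) (at x)"
      by (rule has_derivative_mult_right[OF dc])
    then have "((\<lambda>y. Uf y + bf y + 1/L * \<eta> (L * (Uf y - bf y))) has_derivative
       (\<lambda>h. G \<bullet> h + N (Suc k) \<bullet> h + 1/L * (L * (G \<bullet> h - N (Suc k) \<bullet> h) * e))) (at x)"
      by (intro has_derivative_add dU db)
    then have "((\<lambda>y. 1/2 * (Uf y + bf y + 1/L * \<eta> (L * (Uf y - bf y)))) has_derivative
       (\<lambda>h. 1/2 * (G \<bullet> h + N (Suc k) \<bullet> h + 1/L * (L * (G \<bullet> h - N (Suc k) \<bullet> h) * e)))) (at x)"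
      by (rule has_derivative_mult_right)
    then show ?thesis unfolding eqf
      by (rule has_derivative_eq_rhs) (use L in \<open>auto simp: fun_eq_iff field_simps\<close>)
  qed
  have sumv: "(\<Sum>i\<le>Suc k. a' i *\<^sub>R N i) = ((1 + e) / 2) *\<^sub>R G + ((1 - e) / 2) *\<^sub>R N (Suc k)"
    by (simp add: a'_def G_def scaleR_sum_right)
  have "(\<lambda>h. (G \<bullet> h + N (Suc k) \<bullet> h + L * (G \<bullet> h - N (Suc k) \<bullet> h) * e / L) / 2)
      = (\<lambda>h. (\<Sum>i\<le>Suc k. a' i *\<^sub>R N i) \<bullet> h)"
    unfolding sumv using L by (auto simp: fun_eq_iff inner_add_left field_simps)
  with dtot have d': "(uhat \<eta> \<gamma> l0 u (Suc k) has_derivative (\<lambda>h. (\<Sum>i\<le>Suc k. a' i *\<^sub>R N i) \<bullet> h)) (at x)"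
    by simp
  have eB: "\<bar>e\<bar> \<le> 1" using B by (simp add: e_def)
  have nn: "\<forall>i\<le>Suc k. 0 \<le> a' i" using eB ha(2) by (auto simp: a'_def le_Suc_eq)
  have s1: "(\<Sum>i\<le>Suc k. a' i) = 1"
  proof -
    have "(\<Sum>i\<le>Suc k. a' i) = (\<Sum>i\<le>k. (1 + e) / 2 * a i) + (1 - e) / 2"
      by (simp add: a'_def)
    also have "\<dots> = (1 + e) / 2 * (\<Sum>i\<le>k. a i) + (1 - e) / 2" by (simp add: sum_distrib_left)
    also have "\<dots> = 1" using ha(3) by (simp add: field_simps)
    finally show ?thesis .
  qed
  define Dk where "Dk = (1 - (1/2::real)^k) / l0"
  have invL: "1 / L \<le> (1/2)^Suc k / l0"
  proof -
    have "1 / L = \<gamma>^Suc k / l0" by (simp add: L_def lam_def)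
    also have "\<dots> \<le> (1/2)^Suc k / l0" using g l0
      by (intro divide_right_mono power_mono) auto
    finally show ?thesis .
  qed
  have Dstep: "Dk + 1 / L \<le> (1 - (1/2)^Suc k) / l0"
  proof -
    have "(1 - (1/2::real)^Suc k) / l0 = Dk + (1/2)^Suc k / l0"
      unfolding Dk_def power_Suc using l0 by (simp add: field_simps)
    then show ?thesis using invL by linarith
  qed
  have invL2: "1 / L \<le> (1 - (1/2)^Suc k) / l0"
  proof -
    have "(1/2::real)^Suc k \<le> 1/2" by (simp add: power_le_one)
    then have "(1/2::real)^Suc k \<le> 1 - (1/2)^Suc k" by simp
    then show ?thesis using invL l0 by (meson divide_right_mono less_imp_le order_trans)
  qed
  have Ueq: "uhat \<eta> \<gamma> l0 u (Suc k) x = (Uf x + bf x + \<eta> s / L) / 2"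
    using eqf s_def by simp
  have bd: "\<forall>i\<le>Suc k. a' i \<noteq> 0 \<longrightarrow> uhat \<eta> \<gamma> l0 u (Suc k) x \<le> u i x + (1 - (1/2)^Suc k) / l0"
  proof (intro allI impI)
    fix i assume i: "i \<le> Suc k" and nz: "a' i \<noteq> 0"
    have eub: "\<eta> s \<le> \<bar>s\<bar> + 1" by (rule eta_ub)
    have sdef: "Uf x - bf x = s / L" using L by (simp add: s_def)
    show "uhat \<eta> \<gamma> l0 u (Suc k) x \<le> u i x + (1 - (1/2)^Suc k) / l0"
    proof (cases "i = Suc k")
      case True
      then have "e \<noteq> 1" using nz by (auto simp: a'_def)
      then have "s \<le> 1/2" using posd unfolding e_def by force
      then have "\<eta> s + s \<le> 2" using eub by linarith
      then have "(\<eta> s + s) * (1 / (2 * L)) \<le> 2 * (1 / (2 * L))" by (rule mult_right_mono) (use L in auto)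
      then have "(\<eta> s + s) / L / 2 \<le> 1 / L" by simp
      moreover have "uhat \<eta> \<gamma> l0 u (Suc k) x = bf x + ((\<eta> s + s) / L) / 2"
        unfolding Ueq using sdef by (simp add: add_divide_distrib)
      ultimately have "uhat \<eta> \<gamma> l0 u (Suc k) x \<le> bf x + 1 / L" by linarith
      moreover have "u i x = bf x" by (simp add: True bfu)
      ultimately show ?thesis using invL2 by linarith
    next
      case False
      then have ik: "i \<le> k" using i by simp
      have "e \<noteq> -1" "a i \<noteq> 0" using nz False by (auto simp: a'_def)
      then have "s \<ge> -1/2" using neg unfolding e_def by force
      then have "\<eta> s - s \<le> 2" using eub by linarith
      then have "(\<eta> s - s) * (1 / (2 * L)) \<le> 2 * (1 / (2 * L))" by (rule mult_right_mono) (use L in auto)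
      then have "(\<eta> s - s) / L / 2 \<le> 1 / L" by simp
      moreover have "uhat \<eta> \<gamma> l0 u (Suc k) x = Uf x + ((\<eta> s - s) / L) / 2"
        unfolding Ueq using sdef by (simp add: diff_divide_distrib add_divide_distrib)
      ultimately have "uhat \<eta> \<gamma> l0 u (Suc k) x \<le> Uf x + 1 / L" by linarith
      moreover have "Uf x \<le> u i x + Dk" using ha(4) ik \<open>a i \<noteq> 0\<close> by (simp add: Uf_def Dk_def)
      ultimately show ?thesis using Dstep by linarith
    qed
  qed
  show ?case using d' nn s1 bd by blast
qed

theorem lemma2p10:
  fixes u :: "nat \<Rightarrow> 'a::euclidean_space \<Rightarrow> real"
    and N :: "nat \<Rightarrow> 'a" and c :: "nat \<Rightarrow> real"
    and q :: nat and \<Omega> :: "'a set"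
    and \<eta> :: "real \<Rightarrow> real" and \<Lambda> :: real
  assumes dim: "DIM('a) \<ge> 3"
    and affine: "\<And>m x. m \<le> q \<Longrightarrow> u m x = N m \<bullet> x + c m"
    and unit: "\<And>m. m \<le> q \<Longrightarrow> norm (N m) = 1"
    and Omega_def: "\<Omega> = {x. \<forall>m\<le>q. u m x \<le> 0}"
    and compact: "compact \<Omega>"
    and interior: "interior \<Omega> \<noteq> {}"
    and cond_a: "\<And>k. k \<le> q \<Longrightarrow> \<exists>x. u k x > 0 \<and> (\<forall>m\<le>q. m \<noteq> k \<longrightarrow> u m x \<le> 0)"
    and cond_c: "\<And>j k x. j < k \<Longrightarrow> k \<le> q \<Longrightarrow> x \<in> \<Omega> \<Longrightarrow> u j x = 0 \<Longrightarrow> u k x = 0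
                   \<Longrightarrow> N j \<bullet> N k \<le> 0"
    and eta_smooth: "smooth_real \<eta>"
    and eta_even: "\<And>t. \<eta> (- t) = \<eta> t"
    and eta_abs: "\<And>t. \<bar>t\<bar> \<ge> 1/2 \<Longrightarrow> \<eta> t = \<bar>t\<bar>"
    and eta_convex: "\<And>t. deriv (deriv \<eta>) t \<ge> 0"
    and Lambda_gt: "\<Lambda> > 1"
    and Lambda: "\<And>x a. x \<in> \<Omega> \<Longrightarrow> (\<forall>i\<le>q. a i \<ge> 0) \<Longrightarrow>
                   (\<forall>i\<le>q. u i x \<le> - 2 / \<Lambda> \<longrightarrow> a i = 0) \<Longrightarrow>
                   (\<Sum>i\<le>q. a i) \<le> \<Lambda> * norm (\<Sum>i\<le>q. a i *\<^sub>R N i)"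
  shows "\<forall>\<gamma>. 0 < \<gamma> \<and> \<gamma> < 1/2 \<longrightarrow>
          (\<exists>lbar. \<forall>l0. l0 > 1 \<and> l0 \<ge> lbar \<longrightarrow>
             (\<forall>k\<le>q. \<forall>x\<in>\<Omega>. - 1/\<Lambda> \<le> uhat \<eta> \<gamma> l0 u k x \<and> uhat \<eta> \<gamma> l0 u k x \<le> 0 \<longrightarrow>
                (\<exists>g. (uhat \<eta> \<gamma> l0 u k has_derivative (\<lambda>h. g \<bullet> h)) (at x) \<and> norm g \<ge> 1/\<Lambda>))
           \<and> (\<forall>x. uhat \<eta> \<gamma> l0 u q x = 0 \<longrightarrow>
                (\<exists>g. (uhat \<eta> \<gamma> l0 u q has_derivative (\<lambda>h. g \<bullet> h)) (at x) \<and> g \<noteq> 0)))"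
proof (intro allI impI)
  fix \<gamma> :: real assume g: "0 < \<gamma> \<and> \<gamma> < 1/2"
  note E = eta_props[OF eta_smooth eta_even eta_abs eta_convex]
  show "\<exists>lbar. \<forall>l0. l0 > 1 \<and> l0 \<ge> lbar \<longrightarrow>
             (\<forall>k\<le>q. \<forall>x\<in>\<Omega>. - 1/\<Lambda> \<le> uhat \<eta> \<gamma> l0 u k x \<and> uhat \<eta> \<gamma> l0 u k x \<le> 0 \<longrightarrow>
                (\<exists>g. (uhat \<eta> \<gamma> l0 u k has_derivative (\<lambda>h. g \<bullet> h)) (at x) \<and> norm g \<ge> 1/\<Lambda>))
           \<and> (\<forall>x. uhat \<eta> \<gamma> l0 u q x = 0 \<longrightarrow>
                (\<exists>g. (uhat \<eta> \<gamma> l0 u q has_derivative (\<lambda>h. g \<bullet> h)) (at x) \<and> g \<noteq> 0))"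
  proof (intro exI[of _ "\<Lambda> + 1"] allI impI)
    fix l0 :: real assume l0: "l0 > 1 \<and> \<Lambda> + 1 \<le> l0"
    have main: "\<exists>g. (uhat \<eta> \<gamma> l0 u k has_derivative (\<lambda>h. g \<bullet> h)) (at x) \<and> norm g \<ge> 1/\<Lambda>"
      if k: "k \<le> q" and x: "x \<in> \<Omega>" and lo: "- 1/\<Lambda> \<le> uhat \<eta> \<gamma> l0 u k x" for k x
    proof -
      obtain a where ha: "(uhat \<eta> \<gamma> l0 u k has_derivative (\<lambda>h. (\<Sum>i\<le>k. a i *\<^sub>R N i) \<bullet> h)) (at x)"
        "\<forall>i\<le>k. 0 \<le> a i" "(\<Sum>i\<le>k. a i) = 1"
        "\<forall>i\<le>k. a i \<noteq> 0 \<longrightarrow> uhat \<eta> \<gamma> l0 u k x \<le> u i x + (1 - (1/2)^k) / l0"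
      proof -
        have "\<exists>a. (uhat \<eta> \<gamma> l0 u k has_derivative (\<lambda>h. (\<Sum>i\<le>k. a i *\<^sub>R N i) \<bullet> h)) (at x)
          \<and> (\<forall>i\<le>k. 0 \<le> a i) \<and> (\<Sum>i\<le>k. a i) = 1
          \<and> (\<forall>i\<le>k. a i \<noteq> 0 \<longrightarrow> uhat \<eta> \<gamma> l0 u k x \<le> u i x + (1 - (1/2)^k) / l0)"
          by (rule uhat_grad[OF affine E(1) E(2) E(3) E(4) E(6)]) (use g l0 k in auto)
        then show ?thesis using that by blast
      qed
      define a2 where "a2 = (\<lambda>i. if i \<le> k then a i else 0)"
      have s1: "(\<Sum>i\<le>q. a2 i) = (\<Sum>i\<le>k. a i)"
        unfolding a2_def by (rule sum.mono_neutral_cong_right) (use k in auto)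
      have s2: "(\<Sum>i\<le>q. a2 i *\<^sub>R N i) = (\<Sum>i\<le>k. a i *\<^sub>R N i)"
        unfolding a2_def by (rule sum.mono_neutral_cong_right) (use k in auto)
      have nn: "\<forall>i\<le>q. a2 i \<ge> 0" using ha(2) by (auto simp: a2_def)
      have Lp: "\<Lambda> > 0" using Lambda_gt by simp
      have ll: "1 / l0 < 1 / \<Lambda>" using l0 Lp by (simp add: frac_less2)
      have pk: "(1 - (1/2::real)^k) / l0 \<le> 1 / l0" using l0 by (simp add: divide_right_mono)
      have zero: "\<forall>i\<le>q. u i x \<le> - 2 / \<Lambda> \<longrightarrow> a2 i = 0"
      proof (intro allI impI)
        fix i assume i: "i \<le> q" "u i x \<le> - 2 / \<Lambda>"
        show "a2 i = 0"
        proof (rule ccontr)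
          assume "a2 i \<noteq> 0"
          then have "i \<le> k" "a i \<noteq> 0" by (auto simp: a2_def split: if_splits)
          then have "uhat \<eta> \<gamma> l0 u k x \<le> u i x + (1 - (1/2)^k) / l0" using ha(4) by blast
          moreover have "- 2 / \<Lambda> = - 1 / \<Lambda> - 1 / \<Lambda>" by simp
          ultimately show False using i(2) lo ll pk by linarith
        qed
      qed
      have "(\<Sum>i\<le>q. a2 i) \<le> \<Lambda> * norm (\<Sum>i\<le>q. a2 i *\<^sub>R N i)"
        by (rule Lambda[OF x nn zero])
      then have "1 \<le> \<Lambda> * norm (\<Sum>i\<le>k. a i *\<^sub>R N i)" using s1 s2 ha(3) by simp
      then have "1 / \<Lambda> \<le> norm (\<Sum>i\<le>k. a i *\<^sub>R N i)" using Lp by (simp add: divide_le_eq mult.commute)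
      then show ?thesis using ha(1) by blast
    qed
    show "(\<forall>k\<le>q. \<forall>x\<in>\<Omega>. - 1/\<Lambda> \<le> uhat \<eta> \<gamma> l0 u k x \<and> uhat \<eta> \<gamma> l0 u k x \<le> 0 \<longrightarrow>
                (\<exists>g. (uhat \<eta> \<gamma> l0 u k has_derivative (\<lambda>h. g \<bullet> h)) (at x) \<and> norm g \<ge> 1/\<Lambda>))
           \<and> (\<forall>x. uhat \<eta> \<gamma> l0 u q x = 0 \<longrightarrow>
                (\<exists>g. (uhat \<eta> \<gamma> l0 u q has_derivative (\<lambda>h. g \<bullet> h)) (at x) \<and> g \<noteq> 0))"
    proof (intro conjI allI impI ballI)
      fix k x assume "k \<le> q" "x \<in> \<Omega>" "- 1/\<Lambda> \<le> uhat \<eta> \<gamma> l0 u k x \<and> uhat \<eta> \<gamma> l0 u k x \<le> 0"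
      then show "\<exists>g. (uhat \<eta> \<gamma> l0 u k has_derivative (\<lambda>h. g \<bullet> h)) (at x) \<and> norm g \<ge> 1/\<Lambda>"
        using main by blast
    next
      fix x assume x0: "uhat \<eta> \<gamma> l0 u q x = 0"
      have "\<forall>i\<le>q. u i x \<le> uhat \<eta> \<gamma> l0 u q x"
        by (rule uhat_ge) (use E(5) g l0 in auto)
      then have "x \<in> \<Omega>" using x0 Omega_def by auto
      moreover have "- 1/\<Lambda> \<le> uhat \<eta> \<gamma> l0 u q x" using x0 Lambda_gt by simp
      ultimately obtain gg where "(uhat \<eta> \<gamma> l0 u q has_derivative (\<lambda>h. gg \<bullet> h)) (at x)" "norm gg \<ge> 1/\<Lambda>"
        using main[of q x] by blast
      moreover have "gg \<noteq> 0" using calculation(2) Lambda_gt by auto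
      ultimately show "\<exists>g. (uhat \<eta> \<gamma> l0 u q has_derivative (\<lambda>h. g \<bullet> h)) (at x) \<and> g \<noteq> 0" by blast
    qed
  qed
qed

end
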